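(* Fix any constant $c > 0$. There exists an adaptive algorithm that, given $n$ items among which an unknown number $k$ are defective and accessed through noisy group tests as in the context, outputs $\bar k$ satisfying $\frac{\bar k}{2} \le k \le \bar k$ with probability $1 - O(n^{-c})$, using an average of $O(\log k \cdot \log n)$ tests. Moreover, for any fixed $\epsilon \in (0,1)$ there exists such an algorithm outputting $\bar k$ with $(1-\epsilon)\bar k \le k \le \bar k$ with probability $1-O(n^{-c})$, using an average of $O(\log k\cdot\log n)$ tests, where the implicit constant in the number of tests depends on $\epsilon$.
   Context: Noisy group test: a test is a subset (pool) of the items, and its outcome is $Y = U \oplus Z$, where $U=1$ if the pool contains at least one defective and $U=0$ otherwise, $Z\sim\mathrm{Bernoulli}(\rho)$ for a fixed $\rho \in (0,\frac12)$ independently across tests, and $\oplus$ is addition modulo 2. Tests may be chosen adaptively (depending on previous outcomes) and the number of tests may be random. Asymptotics are as $n\to\infty$. *)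

theory Defs
  imports "HOL-Probability.Probability"
begin

text \<open>Items are 0..n-1. A history records the pools tested so far with their
 (noisy) outcomes. A (possibly randomized) adaptive algorithm is a behavioural
 strategy: given the history it either outputs an estimate (Inl) or chooses the
 next pool (Inr), at random according to a pmf.\<close>

type_synonym gt_hist = "(nat set \<times> bool) list"
type_synonym gt_algo = "gt_hist \<Rightarrow> (nat + nat set) pmf"

text \<open>One step of the interaction. State: history and (optional) output.
 Outcome of testing pool S is U xor Z with U = (S meets K) and Z ~ Bernoulli(rho).\<close>

definition gt_step :: "real \<Rightarrow> nat set \<Rightarrow> gt_algo \<Rightarrow> gt_hist \<times> nat option
    \<Rightarrow> (gt_hist \<times> nat option) pmf" where
  "gt_step \<rho> K A s = (case snd s of
      Some _ \<Rightarrow> return_pmf s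
    | None \<Rightarrow> bind_pmf (A (fst s)) (\<lambda>d. case d of
        Inl kb \<Rightarrow> return_pmf (fst s, Some kb)
      | Inr S \<Rightarrow> map_pmf (\<lambda>z. (fst s @ [(S, (S \<inter> K \<noteq> {}) \<noteq> z)], None))
                    (bernoulli_pmf \<rho>)))"

definition gt_run :: "real \<Rightarrow> nat set \<Rightarrow> gt_algo \<Rightarrow> nat \<Rightarrow> (gt_hist \<times> nat option) pmf" where
  "gt_run \<rho> K A t = ((\<lambda>p. bind_pmf p (gt_step \<rho> K A)) ^^ t) (return_pmf ([], None))"

definition gt_success_prob :: "real \<Rightarrow> nat set \<Rightarrow> gt_algo \<Rightarrow> (nat \<Rightarrow> bool) \<Rightarrow> real" where
  "gt_success_prob \<rho> K A P =
     (SUP t. measure_pmf.prob (gt_run \<rho> K A t) {s. \<exists>kb. snd s = Some kb \<and> P kb})"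

text \<open>Expected number of tests performed within the first t steps; the expected
 total number of tests is the supremum over t (monotone convergence).\<close>
definition gt_tests_upto :: "real \<Rightarrow> nat set \<Rightarrow> gt_algo \<Rightarrow> nat \<Rightarrow> real" where
  "gt_tests_upto \<rho> K A t =
     measure_pmf.expectation (gt_run \<rho> K A t) (\<lambda>s. real (length (fst s)))"

end

theory Submission
  imports Defs
begin

definition bstep :: "(nat \<Rightarrow> bool pmf) \<Rightarrow> (bool list \<Rightarrow> nat + nat) \<Rightarrow> bool list \<times> nat option \<Rightarrow> (bool list \<times> nat option) pmf" where
  "bstep Qf d s = (case snd s of Some _ \<Rightarrow> return_pmf s
     | None \<Rightarrow> (case d (fst s) of Inl kb \<Rightarrow> return_pmf (fst s, Some kb)
         | Inr j \<Rightarrow> map_pmf (\<lambda>b. (fst s @ [b], None)) (Qf j)))"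

definition brun where
  "brun Qf d s t = ((\<lambda>p. bind_pmf p (bstep Qf d)) ^^ t) (return_pmf s)"

definition strip :: "gt_hist \<times> nat option \<Rightarrow> bool list \<times> nat option" where
  "strip s = (map snd (fst s), snd s)"

definition mkalgo :: "(bool list \<Rightarrow> nat + nat) \<Rightarrow> (nat \<Rightarrow> nat set pmf) \<Rightarrow> gt_algo" where
  "mkalgo d P h = (case d (map snd h) of Inl kb \<Rightarrow> return_pmf (Inl kb) | Inr j \<Rightarrow> map_pmf Inr (P j))"

definition Qb :: "real \<Rightarrow> nat set \<Rightarrow> (nat \<Rightarrow> nat set pmf) \<Rightarrow> nat \<Rightarrow> bool pmf" where
  "Qb \<rho> K P j = bind_pmf (P j) (\<lambda>S. map_pmf (\<lambda>z. (S \<inter> K \<noteq> {}) \<noteq> z) (bernoulli_pmf \<rho>))"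

lemma strip_step:
  "map_pmf strip (gt_step \<rho> K (mkalgo d P) s) = bstep (Qb \<rho> K P) d (strip s)"
proof (cases "snd s")
  case None
  then show ?thesis
    by (cases "d (map snd (fst s))")
       (simp_all add: gt_step_def bstep_def strip_def mkalgo_def Qb_def map_bind_pmf bind_map_pmf
          map_pmf_comp bind_return_pmf o_def)
next
  case (Some a)
  then show ?thesis by (simp add: gt_step_def bstep_def strip_def)
qed

lemma strip_run:
  "map_pmf strip (gt_run \<rho> K (mkalgo d P) t) = brun (Qb \<rho> K P) d ([], None) t"
proof (induction t)
  case 0
  then show ?case by (simp add: gt_run_def brun_def strip_def)
next
  case (Suc t)
  have "map_pmf strip (gt_run \<rho> K (mkalgo d P) (Suc t)) =
     bind_pmf (gt_run \<rho> K (mkalgo d P) t) (\<lambda>s. map_pmf strip (gt_step \<rho> K (mkalgo d P) s))"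
    by (simp add: gt_run_def map_bind_pmf)
  also have "\<dots> = bind_pmf (gt_run \<rho> K (mkalgo d P) t) (\<lambda>s. bstep (Qb \<rho> K P) d (strip s))"
    by (simp add: strip_step)
  also have "\<dots> = bind_pmf (map_pmf strip (gt_run \<rho> K (mkalgo d P) t)) (bstep (Qb \<rho> K P) d)"
    by (simp add: bind_map_pmf)
  also have "\<dots> = brun (Qb \<rho> K P) d ([], None) (Suc t)"
    using Suc by (simp add: brun_def)
  finally show ?case .
qed

lemma funpow_bind:
  "((\<lambda>p. bind_pmf p (f :: 'a \<Rightarrow> 'a pmf)) ^^ t) p = bind_pmf p (\<lambda>s. ((\<lambda>p. bind_pmf p f) ^^ t) (return_pmf s))"
proof (induction t arbitrary: p)
  case 0
  show ?case by (simp add: bind_return_pmf' id_def)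
next
  case (Suc t)
  show ?case
    apply (simp only: funpow.simps o_def)
    apply (subst Suc)
    apply (subst Suc[of "return_pmf _"])
    apply (simp add: bind_assoc_pmf bind_return_pmf)
    done
qed

lemma brun_add:
  "brun Qf d s (a + b) = bind_pmf (brun Qf d s a) (\<lambda>s'. brun Qf d s' b)"
  unfolding brun_def
  by (subst add.commute, subst funpow_add, simp add: o_def, subst funpow_bind, rule refl)

lemma brun_Suc:
  "brun Qf d s (Suc t) = bind_pmf (brun Qf d s t) (bstep Qf d)"
  by (simp add: brun_def)

lemma brun_0: "brun Qf d s 0 = return_pmf s"
  by (simp add: brun_def)

lemma brun_halted: "brun Qf d (bs, Some kb) t = return_pmf (bs, Some kb)"
  by (induction t) (simp_all add: brun_Suc brun_0 bind_return_pmf bstep_def)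

lemma brun_Inl: "d bs = Inl kb \<Longrightarrow> brun Qf d (bs, None) (Suc t) = return_pmf (bs, Some kb)"
  using brun_add[of Qf d "(bs,None)" 1 t]
  by (simp add: brun_Suc brun_0 bind_return_pmf bstep_def brun_halted)

fun iidl :: "nat \<Rightarrow> bool pmf \<Rightarrow> bool list pmf" where
  "iidl 0 Q = return_pmf []"
| "iidl (Suc i) Q = bind_pmf (iidl i Q) (\<lambda>b. map_pmf (\<lambda>x. b @ [x]) Q)"

lemma iidl_length: "b \<in> set_pmf (iidl i Q) \<Longrightarrow> length b = i"
  by (induction i arbitrary: b) auto

lemma iidl_count:
  assumes "q \<in> {0..1}"
  shows "map_pmf (\<lambda>b. length (filter id b)) (iidl i (bernoulli_pmf q)) = binomial_pmf i q"
proof (induction i)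
  case 0
  then show ?case using assms by (simp add: binomial_pmf_0)
next
  case (Suc i)
  have "map_pmf (\<lambda>b. length (filter id b)) (iidl (Suc i) (bernoulli_pmf q)) =
     bind_pmf (map_pmf (\<lambda>b. length (filter id b)) (iidl i (bernoulli_pmf q)))
       (\<lambda>c. bind_pmf (bernoulli_pmf q) (\<lambda>x. return_pmf ((if x then 1 else 0) + c)))"
    apply (simp add: map_bind_pmf bind_map_pmf map_pmf_comp map_pmf_def[of _ "bernoulli_pmf q"]
        bind_return_pmf bind_assoc_pmf)
    by (intro bind_pmf_cong refl, auto)
  also have "\<dots> = binomial_pmf (Suc i) q"
    using assms by (simp add: Suc binomial_pmf_Suc bind_commute_pmf[of "binomial_pmf i q"])
  finally show ?case .
qed

lemma bool_pmf_bernoulli: "Q = bernoulli_pmf (pmf Q True)"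
proof (rule pmf_eqI)
  fix x :: bool
  have s: "pmf Q False + pmf Q True = 1"
    using sum_pmf_eq_1[of UNIV Q, OF finite subset_UNIV] by (simp add: UNIV_bool)
  show "pmf Q x = pmf (bernoulli_pmf (pmf Q True)) x"
    using s by (cases x) (simp_all add: pmf_le_1)
qed

lemma brun_block:
  assumes "\<And>b. length b < i \<Longrightarrow> d (bs @ b) = Inr j"
  shows "brun Qf d (bs, None) i = map_pmf (\<lambda>b. (bs @ b, None)) (iidl i (Qf j))"
  using assms
proof (induction i)
  case 0
  then show ?case by (simp add: brun_0)
next
  case (Suc i)
  have "brun Qf d (bs, None) (Suc i) = bind_pmf (iidl i (Qf j)) (\<lambda>b. bstep Qf d (bs @ b, None))"
    using Suc by (simp add: brun_Suc bind_map_pmf)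
  also have "\<dots> = bind_pmf (iidl i (Qf j)) (\<lambda>b. map_pmf (\<lambda>x. (bs @ b @ [x], None)) (Qf j))"
    by (rule bind_pmf_cong) (auto simp: bstep_def Suc.prems iidl_length)
  also have "\<dots> = map_pmf (\<lambda>b. (bs @ b, None)) (iidl (Suc i) (Qf j))"
    by (simp add: map_bind_pmf map_pmf_comp)
  finally show ?case .
qed

definition prate :: "real \<Rightarrow> nat \<Rightarrow> real" where
  "prate r j = 1 - 2 powr (- (1 / r ^ j))"

definition pool :: "nat \<Rightarrow> real \<Rightarrow> nat \<Rightarrow> nat set pmf" where
  "pool n r j = map_pmf (\<lambda>f. {i. i < n \<and> f i}) (Pi_pmf {..<n} False (\<lambda>_. bernoulli_pmf (prate r j)))"

lemma prob_Pi_miss: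
  fixes K :: "nat set"
  assumes "K \<subseteq> {..<n}" "0 \<le> p" "p \<le> 1"
  shows "measure_pmf.prob (Pi_pmf {..<n} False (\<lambda>_. bernoulli_pmf p)) {f. \<forall>i\<in>K. \<not> f i} = (1 - p) ^ card K"
proof -
  define B where "B = (\<lambda>i::nat. if i \<in> K then {False} else (UNIV :: bool set))"
  have eq: "{f. \<forall>i\<in>K. \<not> f i} = Pi {..<n} B"
    using assms(1) by (auto simp: B_def Pi_def)
  have "measure_pmf.prob (Pi_pmf {..<n} False (\<lambda>_. bernoulli_pmf p)) (Pi {..<n} B) =
      (\<Prod>i\<in>{..<n}. measure_pmf.prob (bernoulli_pmf p) (B i))"
    by (rule measure_Pi_pmf_Pi) simp
  also have "\<dots> = (\<Prod>i\<in>{..<n}. if i \<in> K then 1 - p else 1)"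
    using assms by (intro prod.cong) (auto simp: B_def measure_pmf_single)
  also have "\<dots> = (1 - p) ^ card K"
    using assms(1) by (simp add: prod.If_cases Int_absorb1 Int_def[symmetric] inf.absorb2)
  finally show ?thesis using eq by simp
qed

lemma pmf_map_xor:
  assumes "0 \<le> \<rho>" "\<rho> \<le> 1"
  shows "pmf (map_pmf (\<lambda>z. U \<noteq> z) (bernoulli_pmf \<rho>)) True = (if U then 1 - \<rho> else \<rho>)"
proof (cases U)
  case True
  have "(\<lambda>z. U \<noteq> z) -` {True} = {False}" using True by auto
  then show ?thesis using True assms by (simp add: pmf_map measure_pmf_single)
next
  case False
  have "(\<lambda>z. U \<noteq> z) -` {True} = {True}" using False by auto
  then show ?thesis using False assms by (simp add: pmf_map measure_pmf_single)
qed

lemma pmf_Qb_pool: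
  assumes "K \<subseteq> {..<n}" "0 \<le> \<rho>" "\<rho> \<le> 1" "0 \<le> prate r j" "prate r j \<le> 1"
  shows "pmf (Qb \<rho> K (pool n r) j) True = \<rho> + (1 - 2 * \<rho>) * (1 - (1 - prate r j) ^ card K)"
proof -
  define M where "M = pool n r j"
  define A where "A = {S. S \<inter> K \<noteq> {}}"
  have "pmf (Qb \<rho> K (pool n r) j) True = measure_pmf.expectation M (\<lambda>S. \<rho> + (1 - 2 * \<rho>) * indicator A S)"
    unfolding Qb_def pmf_bind M_def
  proof (intro Bochner_Integration.integral_cong refl)
    fix S
    have h: "pmf (map_pmf (\<lambda>z. (S \<inter> K \<noteq> {}) \<noteq> z) (bernoulli_pmf \<rho>)) True = (if S \<inter> K \<noteq> {} then 1 - \<rho> else \<rho>)"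
      by (rule pmf_map_xor[OF assms(2,3)])
    show "pmf (map_pmf (\<lambda>z. (S \<inter> K \<noteq> {}) \<noteq> z) (bernoulli_pmf \<rho>)) True = \<rho> + (1 - 2 * \<rho>) * indicator A S"
      unfolding h by (simp add: A_def indicator_def)
  qed
  also have "\<dots> = \<rho> + (1 - 2 * \<rho>) * measure_pmf.prob M A"
    by (simp add: measure_pmf.integrable_const_bound[where B=1])
  also have "measure_pmf.prob M A = 1 - measure_pmf.prob M (- A)"
    using measure_pmf.prob_compl[of A M] by (simp add: Compl_eq_Diff_UNIV)
  also have "measure_pmf.prob M (- A) = measure_pmf.prob (Pi_pmf {..<n} False (\<lambda>_. bernoulli_pmf (prate r j))) {f. \<forall>i\<in>K. \<not> f i}"
    unfolding M_def pool_def using assms(1) by (simp add: A_def) (intro arg_cong[where f="measure _"], auto)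
  also have "\<dots> = (1 - prate r j) ^ card K"
    using assms by (intro prob_Pi_miss) auto
  finally show ?thesis .
qed

lemma integrable_pmf_bounded:
  fixes f :: "'a \<Rightarrow> real"
  assumes "\<And>x. x \<in> set_pmf p \<Longrightarrow> \<bar>f x\<bar> \<le> B"
  shows "integrable (measure_pmf p) f"
  using assms by (intro measure_pmf.integrable_const_bound[where B=B] AE_pmfI) auto

lemma exp_bind:
  fixes f :: "'b \<Rightarrow> real"
  assumes "\<And>x. 0 \<le> f x" "\<And>x. f x \<le> B"
  shows "measure_pmf.expectation (bind_pmf p q) f =
         measure_pmf.expectation p (\<lambda>x. measure_pmf.expectation (q x) f)"
proof -
  have B: "0 \<le> B" using assms(1)[of undefined] assms(2)[of undefined] by linarith
  have i1: "integrable (measure_pmf r) f" for r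
    using assms by (intro integrable_pmf_bounded[where B=B]) auto
  have bnd: "0 \<le> measure_pmf.expectation r f \<and> measure_pmf.expectation r f \<le> B" for r
  proof
    show "0 \<le> measure_pmf.expectation r f" using assms by (intro Bochner_Integration.integral_nonneg) auto
    have "measure_pmf.expectation r f \<le> measure_pmf.expectation r (\<lambda>_. B)"
      using assms i1 by (intro integral_mono) auto
    then show "measure_pmf.expectation r f \<le> B" by simp
  qed
  have i2: "integrable (measure_pmf p) (\<lambda>x. measure_pmf.expectation (q x) f)"
    using bnd B by (intro integrable_pmf_bounded[where B=B]) (auto simp: abs_le_iff)
  have "ennreal (measure_pmf.expectation (bind_pmf p q) f) = (\<integral>\<^sup>+x. ennreal (f x) \<partial>measure_pmf (bind_pmf p q))"
    using i1 assms by (intro nn_integral_eq_integral[symmetric]) auto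
  also have "\<dots> = (\<integral>\<^sup>+x. (\<integral>\<^sup>+y. ennreal (f y) \<partial>measure_pmf (q x)) \<partial>measure_pmf p)"
    by simp
  also have "\<dots> = (\<integral>\<^sup>+x. ennreal (measure_pmf.expectation (q x) f) \<partial>measure_pmf p)"
    using i1 assms by (intro nn_integral_cong nn_integral_eq_integral) auto
  also have "\<dots> = ennreal (measure_pmf.expectation p (\<lambda>x. measure_pmf.expectation (q x) f))"
    using i2 bnd by (intro nn_integral_eq_integral) auto
  finally show ?thesis
    using bnd assms by (subst (asm) ennreal_inj) (auto intro!: Bochner_Integration.integral_nonneg)
qed

lemma prob_as_exp: "measure_pmf.prob p A = measure_pmf.expectation p (indicator A)"
  by simp

lemma prob_bind:
  "measure_pmf.prob (bind_pmf p q) A = measure_pmf.expectation p (\<lambda>x. measure_pmf.prob (q x) A)"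
  using exp_bind[of "indicator A :: _ \<Rightarrow> real" 1 p q] by (simp add: indicator_def)

lemma exp_mono_pmf:
  fixes f h :: "'a \<Rightarrow> real"
  assumes "\<And>x. x \<in> set_pmf p \<Longrightarrow> f x \<le> h x" "\<And>x. x \<in> set_pmf p \<Longrightarrow> \<bar>f x\<bar> \<le> B" "\<And>x. x \<in> set_pmf p \<Longrightarrow> \<bar>h x\<bar> \<le> B'"
  shows "measure_pmf.expectation p f \<le> measure_pmf.expectation p h"
  using assms by (intro integral_mono_AE integrable_pmf_bounded AE_pmfI) auto

lemma exp_le_split:
  fixes f :: "'a \<Rightarrow> real"
  assumes "\<And>x. x \<in> set_pmf p \<Longrightarrow> f x \<le> a + b * indicator A x" "\<And>x. x \<in> set_pmf p \<Longrightarrow> \<bar>f x\<bar> \<le> B"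
  shows "measure_pmf.expectation p f \<le> a + b * measure_pmf.prob p A"
proof -
  have "measure_pmf.expectation p f \<le> measure_pmf.expectation p (\<lambda>x. a + b * indicator A x)"
    using assms by (intro exp_mono_pmf[where B=B and B'="\<bar>a\<bar> + \<bar>b\<bar>"]) (auto simp: indicator_def)
  also have "\<dots> = a + b * measure_pmf.prob p A"
  proof -
    have int: "integrable (measure_pmf p) (\<lambda>x. b * indicator A x)"
      by (rule integrable_pmf_bounded[where B="\<bar>b\<bar>"]) (simp add: indicator_def)
    show ?thesis by (subst Bochner_Integration.integral_add[OF measure_pmf.integrable_const int]) simp
  qed
  finally show ?thesis .
qed

lemma exp_ge_split:
  fixes f :: "'a \<Rightarrow> real"
  assumes "\<And>x. x \<in> set_pmf p \<Longrightarrow> a - b * indicator A x \<le> f x" "\<And>x. x \<in> set_pmf p \<Longrightarrow> \<bar>f x\<bar> \<le> B"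
  shows "a - b * measure_pmf.prob p A \<le> measure_pmf.expectation p f"
proof -
  have "a - b * measure_pmf.prob p A = measure_pmf.expectation p (\<lambda>x. a - b * indicator A x)"
  proof -
    have int: "integrable (measure_pmf p) (\<lambda>x. b * indicator A x)"
      by (rule integrable_pmf_bounded[where B="\<bar>b\<bar>"]) (simp add: indicator_def)
    show ?thesis by (subst Bochner_Integration.integral_diff[OF measure_pmf.integrable_const int]) simp
  qed
  also have "\<dots> \<le> measure_pmf.expectation p f"
    using assms by (intro exp_mono_pmf[where B'=B and B="\<bar>a\<bar> + \<bar>b\<bar>"]) (auto simp: indicator_def)
  finally show ?thesis .
qed

definition dec :: "nat \<Rightarrow> nat \<Rightarrow> real \<Rightarrow> real \<Rightarrow> bool list \<Rightarrow> nat + nat" where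
  "dec M J r \<tau> bs = (if length bs mod M \<noteq> 0 then
        (if length bs div M \<le> J then Inr (length bs div M) else Inl 0)
     else if length bs = 0 then Inr 0
     else if real (length (filter id (drop (length bs - M) bs))) < \<tau> * real M
       then Inl (nat \<lfloor>r ^ (length bs div M - 1)\<rfloor>)
     else if length bs div M \<le> J then Inr (length bs div M) else Inl 0)"

lemma dec_0: "dec M J r \<tau> [] = Inr 0"
  by (simp add: dec_def)

lemma dec_mid:
  assumes "0 < M" "length bs = j * M" "j \<le> J" "dec M J r \<tau> bs = Inr j" "length b < M"
  shows "dec M J r \<tau> (bs @ b) = Inr j"
proof (cases "b = []")
  case True then show ?thesis using assms by simp
next
  case False
  then have l: "0 < length b" by simp
  have m: "(j * M + length b) mod M = length b" using assms l by simp
  have dv: "(j * M + length b) div M = j" using assms by simp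
  show ?thesis using assms l m dv by (simp add: dec_def)
qed

lemma dec_end:
  assumes "0 < M" "length bs = j * M" "length b = M"
  shows "dec M J r \<tau> (bs @ b) =
     (if real (length (filter id b)) < \<tau> * real M then Inl (nat \<lfloor>r ^ j\<rfloor>)
      else if Suc j \<le> J then Inr (Suc j) else Inl 0)"
proof -
  have "length (bs @ b) = Suc j * M" using assms by simp
  moreover have "drop (Suc j * M - M) (bs @ b) = b" using assms by simp
  ultimately show ?thesis using assms by (simp add: dec_def)
qed

lemma dec_Inr_len:
  assumes "0 < M" "dec M J r \<tau> bs = Inr j"
  shows "length bs < Suc J * M"
proof -
  let ?L = "length bs"
  have a: "?L < M + M * (?L div M)" using assms(1) by (rule dividend_less_times_div)
  have "?L div M \<le> J" using assms
    by (auto simp: dec_def split: if_splits)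
  then have "M + M * (?L div M) \<le> Suc J * M" by simp
  then show ?thesis using a by linarith
qed

lemma brun_len_bound:
  assumes "\<And>bs j. d bs = Inr j \<Longrightarrow> length bs < D" "length (fst s0) \<le> D"
  shows "s \<in> set_pmf (brun Qf d s0 t) \<Longrightarrow> length (fst s) \<le> D"
proof (induction t arbitrary: s)
  case 0
  then show ?case using assms by (simp add: brun_0)
next
  case (Suc t)
  then obtain s' where s': "s' \<in> set_pmf (brun Qf d s0 t)" "s \<in> set_pmf (bstep Qf d s')"
    by (auto simp: brun_Suc)
  have "length (fst s') \<le> D" using Suc.IH s' by blast
  then show ?case using s' assms(1)
    by (fastforce simp: bstep_def split: option.splits sum.splits)
qed

lemma exp_bind':
  fixes f :: "'b \<Rightarrow> real"
  assumes "\<And>x. x \<in> set_pmf (bind_pmf p q) \<Longrightarrow> 0 \<le> f x \<and> f x \<le> B"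
  shows "measure_pmf.expectation (bind_pmf p q) f =
         measure_pmf.expectation p (\<lambda>x. measure_pmf.expectation (q x) f)"
proof -
  define f' where "f' = (\<lambda>s. max 0 (min (f s) B))"
  obtain x0 where "x0 \<in> set_pmf (bind_pmf p q)" using set_pmf_not_empty[of "bind_pmf p q"] by blast
  then have B: "0 \<le> B" using assms by force
  have "measure_pmf.expectation (bind_pmf p q) f = measure_pmf.expectation (bind_pmf p q) f'"
    using assms by (intro integral_cong_AE AE_pmfI) (auto simp: f'_def)
  also have "\<dots> = measure_pmf.expectation p (\<lambda>x. measure_pmf.expectation (q x) f')"
    using B by (intro exp_bind[where B=B]) (auto simp: f'_def)
  also have "\<dots> = measure_pmf.expectation p (\<lambda>x. measure_pmf.expectation (q x) f)"
  proof -
    have eq: "measure_pmf.expectation (q x) f' = measure_pmf.expectation (q x) f" if x: "x \<in> set_pmf p" for x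
    proof -
      have "f' y = f y" if "y \<in> set_pmf (q x)" for y
      proof -
        have "y \<in> set_pmf (bind_pmf p q)" using x that by auto
        then show "f' y = f y" using assms[of y] by (auto simp: f'_def)
      qed
      then show ?thesis by (intro integral_cong_AE AE_pmfI) auto
    qed
    show ?thesis by (rule integral_cong_AE) (auto intro!: AE_pmfI simp: eq)
  qed
  finally show ?thesis .
qed

context
  fixes Qf :: "nat \<Rightarrow> bool pmf" and k M J :: nat and r \<alpha> \<epsilon> \<tau> g :: real
  assumes M: "0 < M" and k: "1 \<le> k" and r: "1 < r" and al: "0 < \<alpha>" "\<alpha> \<le> 1"
    and eps: "0 \<le> \<epsilon>" "\<epsilon> \<le> 1" "(1 - \<epsilon>) * r \<le> \<alpha>"
    and g: "0 < g"
    and H1: "\<And>j. r ^ j < real k \<Longrightarrow> \<tau> + g \<le> pmf (Qf j) True"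
    and H2: "\<And>j. real k \<le> \<alpha> * r ^ j \<Longrightarrow> pmf (Qf j) True \<le> \<tau> - g"
    and JJ: "real k \<le> \<alpha> * r ^ J"
begin

definition js where "js = (LEAST j. real k \<le> \<alpha> * r ^ j)"

definition Good :: "(bool list \<times> nat option) set" where
  "Good = {s. \<exists>kb. snd s = Some kb \<and> (1 - \<epsilon>) * real kb \<le> real k \<and> k \<le> kb}"

lemma js_ok: "real k \<le> \<alpha> * r ^ js"
  unfolding js_def using JJ by (rule LeastI)

lemma js_le: "js \<le> J"
  unfolding js_def using JJ by (rule Least_le)

lemma js_min: "j < js \<Longrightarrow> \<not> real k \<le> \<alpha> * r ^ j"
  unfolding js_def by (rule not_less_Least)

lemma good_out:
  assumes "j \<le> js" "real k \<le> r ^ j"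
  shows "(bs, Some (nat \<lfloor>r ^ j\<rfloor>)) \<in> Good"
proof -
  have rp: "0 \<le> r ^ j" using r by simp
  have "int k \<le> \<lfloor>r ^ j\<rfloor>" using assms(2) by (simp add: le_floor_iff)
  then have up: "k \<le> nat \<lfloor>r ^ j\<rfloor>" by linarith
  have fl: "real (nat \<lfloor>r ^ j\<rfloor>) \<le> r ^ j" using rp by linarith
  have lo: "(1 - \<epsilon>) * r ^ j \<le> real k"
  proof (cases j)
    case 0
    then show ?thesis using eps k by simp
  next
    case (Suc i)
    then have "i < js" using assms by simp
    then have "\<alpha> * r ^ i < real k" using js_min by force
    moreover have "(1 - \<epsilon>) * r ^ j = ((1 - \<epsilon>) * r) * r ^ i" using Suc by simp
    moreover have "((1 - \<epsilon>) * r) * r ^ i \<le> \<alpha> * r ^ i" using eps r by (intro mult_right_mono) auto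
    ultimately show ?thesis by linarith
  qed
  have "(1 - \<epsilon>) * real (nat \<lfloor>r ^ j\<rfloor>) \<le> (1 - \<epsilon>) * r ^ j"
    using fl eps by (intro mult_left_mono) auto
  then show ?thesis using lo up by (auto simp: Good_def)
qed

lemma count_prob:
  "measure_pmf.prob (iidl M (Qf j)) {b. P (real (length (filter id b)))} =
   measure_pmf.prob (binomial_pmf M (pmf (Qf j) True)) {c. P (real c)}"
proof -
  have q: "pmf (Qf j) True \<in> {0..1}" by (simp add: pmf_le_1)
  have "binomial_pmf M (pmf (Qf j) True) = map_pmf (\<lambda>b. length (filter id b)) (iidl M (Qf j))"
    using iidl_count[OF q, of M] bool_pmf_bernoulli[of "Qf j"] by simp
  then show ?thesis by simp
qed

lemma err_acc:
  assumes "r ^ j < real k"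
  shows "measure_pmf.prob (iidl M (Qf j)) {b. real (length (filter id b)) < \<tau> * real M}
     \<le> exp (- 2 * real M * g\<^sup>2)"
proof -
  let ?q = "pmf (Qf j) True"
  have q: "?q \<in> {0..1}" by (simp add: pmf_le_1)
  have h: "\<tau> + g \<le> ?q" using H1 assms by blast
  have "measure_pmf.prob (iidl M (Qf j)) {b. real (length (filter id b)) < \<tau> * real M}
     = measure_pmf.prob (binomial_pmf M ?q) {c. real c < \<tau> * real M}"
    by (rule count_prob)
  also have "\<dots> \<le> measure_pmf.prob (binomial_pmf M ?q) {c. real c / real M \<le> ?q - g}"
  proof (rule measure_pmf.finite_measure_mono)
    show "{c. real c < \<tau> * real M} \<subseteq> {c. real c / real M \<le> ?q - g}"
    proof
      fix c assume "c \<in> {c. real c < \<tau> * real M}"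
      then have "real c / real M < \<tau>" using M by (simp add: divide_less_eq)
      then show "c \<in> {c. real c / real M \<le> ?q - g}" using h by simp
    qed
  qed simp
  also have "\<dots> \<le> exp (- 2 * real M * g\<^sup>2)"
    using binomial_distribution.prob_le'[of ?q M g] q M g
    by (simp add: binomial_distribution_def)
  finally show ?thesis .
qed

lemma err_rej:
  assumes "real k \<le> \<alpha> * r ^ j"
  shows "measure_pmf.prob (iidl M (Qf j)) {b. \<not> real (length (filter id b)) < \<tau> * real M}
     \<le> exp (- 2 * real M * g\<^sup>2)"
proof -
  let ?q = "pmf (Qf j) True"
  have q: "?q \<in> {0..1}" by (simp add: pmf_le_1)
  have h: "?q \<le> \<tau> - g" using H2 assms by blast
  have "measure_pmf.prob (iidl M (Qf j)) {b. \<not> real (length (filter id b)) < \<tau> * real M}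
     = measure_pmf.prob (binomial_pmf M ?q) {c. \<not> real c < \<tau> * real M}"
    by (rule count_prob)
  also have "\<dots> \<le> measure_pmf.prob (binomial_pmf M ?q) {c. ?q + g \<le> real c / real M}"
  proof (rule measure_pmf.finite_measure_mono)
    show "{c. \<not> real c < \<tau> * real M} \<subseteq> {c. ?q + g \<le> real c / real M}"
    proof
      fix c assume "c \<in> {c. \<not> real c < \<tau> * real M}"
      then have "\<tau> \<le> real c / real M" using M by (simp add: le_divide_eq)
      then show "c \<in> {c. ?q + g \<le> real c / real M}" using h by simp
    qed
  qed simp
  also have "\<dots> \<le> exp (- 2 * real M * g\<^sup>2)"
    using binomial_distribution.prob_ge'[of ?q M g] q M g
    by (simp add: binomial_distribution_def)
  finally show ?thesis .
qed


abbreviation "dd \<equiv> dec M J r \<tau>"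
abbreviation "cnt b \<equiv> real (length (filter id b))"

lemma block_split:
  assumes "j \<le> J" "length bs = j * M" "dd bs = Inr j"
  shows "brun Qf dd (bs, None) (M + t) = bind_pmf (iidl M (Qf j)) (\<lambda>b. brun Qf dd (bs @ b, None) t)"
proof -
  have "brun Qf dd (bs, None) M = map_pmf (\<lambda>b. (bs @ b, None)) (iidl M (Qf j))"
    by (rule brun_block) (use dec_mid[OF M assms(2,1,3)] in auto)
  then show ?thesis by (simp add: brun_add bind_map_pmf)
qed

lemma after_acc:
  assumes "length bs = j * M" "length b = M" "cnt b < \<tau> * real M"
  shows "brun Qf dd (bs @ b, None) (Suc t) = return_pmf (bs @ b, Some (nat \<lfloor>r ^ j\<rfloor>))"
  using dec_end[OF M assms(1,2)] assms(3) by (intro brun_Inl) simp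

lemma after_rej:
  assumes "length bs = j * M" "length b = M" "\<not> cnt b < \<tau> * real M" "Suc j \<le> J"
  shows "dd (bs @ b) = Inr (Suc j)"
  using dec_end[OF M assms(1,2)] assms(3,4) by simp

lemma delta_nonneg: "0 \<le> exp (- 2 * real M * g\<^sup>2)" by simp

lemma succ_aux:
  "j \<le> js \<Longrightarrow> m = js - j \<Longrightarrow> length bs = j * M \<Longrightarrow> dd bs = Inr j \<Longrightarrow>
   1 - real (m + 1) * exp (- 2 * real M * g\<^sup>2) \<le> measure_pmf.prob (brun Qf dd (bs, None) (m * M + M + 1)) Good"
proof (induction m arbitrary: j bs)
  case 0
  let ?\<delta> = "exp (- 2 * real M * g\<^sup>2)"
  have j: "j = js" using 0 by simp
  have jJ: "j \<le> J" using j js_le by simp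
  define F where "F = (\<lambda>b. measure_pmf.prob (brun Qf dd (bs @ b, None) 1) Good)"
  have "brun Qf dd (bs, None) (0 * M + M + 1) = bind_pmf (iidl M (Qf j)) (\<lambda>b. brun Qf dd (bs @ b, None) 1)"
    using block_split[OF jJ 0(3,4), of 1] by simp
  then have eq: "measure_pmf.prob (brun Qf dd (bs, None) (0 * M + M + 1)) Good = measure_pmf.expectation (iidl M (Qf j)) F"
    by (simp add: prob_bind F_def)
  have kr: "real k \<le> r ^ j"
  proof -
    have "\<alpha> * r ^ js \<le> r ^ js" using al r by (intro mult_left_le_one_le) auto
    then show ?thesis using js_ok j by simp
  qed
  have "1 - 1 * measure_pmf.prob (iidl M (Qf j)) {b. \<not> cnt b < \<tau> * real M} \<le> measure_pmf.expectation (iidl M (Qf j)) F"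
  proof (rule exp_ge_split[where B=1])
    fix b assume b: "b \<in> set_pmf (iidl M (Qf j))"
    then have lb: "length b = M" by (rule iidl_length)
    show "1 - 1 * indicator {b. \<not> cnt b < \<tau> * real M} b \<le> F b"
    proof (cases "cnt b < \<tau> * real M")
      case True
      then have "brun Qf dd (bs @ b, None) 1 = return_pmf (bs @ b, Some (nat \<lfloor>r ^ j\<rfloor>))"
        using after_acc[OF 0(3) lb True, of 0] by simp
      moreover have "(bs @ b, Some (nat \<lfloor>r ^ j\<rfloor>)) \<in> Good" using good_out j kr by simp
      ultimately show ?thesis by (simp add: F_def)
    next
      case False
      then show ?thesis by (simp add: F_def)
    qed
  next
    fix b show "\<bar>F b\<bar> \<le> 1" by (simp add: F_def)
  qed
  moreover have "measure_pmf.prob (iidl M (Qf j)) {b. \<not> cnt b < \<tau> * real M} \<le> ?\<delta>"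
    using err_rej js_ok j by simp
  ultimately show ?case using eq by simp
next
  case (Suc m)
  let ?\<delta> = "exp (- 2 * real M * g\<^sup>2)"
  have j: "j < js" using Suc by simp
  have jJ: "Suc j \<le> J" using j js_le by simp
  define T where "T = Suc m * M + 1"
  define F where "F = (\<lambda>b. measure_pmf.prob (brun Qf dd (bs @ b, None) T) Good)"
  have "brun Qf dd (bs, None) (Suc m * M + M + 1) = bind_pmf (iidl M (Qf j)) (\<lambda>b. brun Qf dd (bs @ b, None) T)"
  proof -
    have e: "Suc m * M + M + 1 = M + T" by (simp add: T_def)
    show ?thesis unfolding e by (rule block_split) (use jJ Suc.prems in auto)
  qed
  then have eq: "measure_pmf.prob (brun Qf dd (bs, None) (Suc m * M + M + 1)) Good = measure_pmf.expectation (iidl M (Qf j)) F"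
    by (simp add: prob_bind F_def)
  have IH: "1 - real (m + 1) * ?\<delta> \<le> F b" if b: "b \<in> set_pmf (iidl M (Qf j))" "\<not> cnt b < \<tau> * real M" for b
  proof -
    have lb: "length b = M" using b by (intro iidl_length)
    have "1 - real (m + 1) * ?\<delta> \<le> measure_pmf.prob (brun Qf dd (bs @ b, None) (m * M + M + 1)) Good"
    proof (rule Suc.IH)
      show "Suc j \<le> js" using j by simp
      show "m = js - Suc j" using Suc.prems by simp
      show "length (bs @ b) = Suc j * M" using Suc.prems lb by simp
      show "dd (bs @ b) = Inr (Suc j)" by (rule after_rej[OF Suc.prems(3) lb b(2) jJ])
    qed
    moreover have "m * M + M + 1 = T" by (simp add: T_def)
    ultimately show ?thesis by (simp add: F_def)
  qed
  show ?case
  proof (cases "real k \<le> r ^ j")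
    case True
    have "1 - real (m + 1) * ?\<delta> - 0 * measure_pmf.prob (iidl M (Qf j)) {} \<le> measure_pmf.expectation (iidl M (Qf j)) F"
    proof (rule exp_ge_split[where B=1])
      fix b assume b: "b \<in> set_pmf (iidl M (Qf j))"
      then have lb: "length b = M" by (rule iidl_length)
      show "1 - real (m + 1) * ?\<delta> - 0 * indicator {} b \<le> F b"
      proof (cases "cnt b < \<tau> * real M")
        case True
        then have "brun Qf dd (bs @ b, None) T = return_pmf (bs @ b, Some (nat \<lfloor>r ^ j\<rfloor>))"
          using after_acc[OF Suc.prems(3) lb True, of "Suc m * M"] by (simp add: T_def)
        moreover have "(bs @ b, Some (nat \<lfloor>r ^ j\<rfloor>)) \<in> Good" using good_out j \<open>real k \<le> r ^ j\<close> by simp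
        ultimately show ?thesis by (simp add: F_def)
      next
        case False
        then show ?thesis using IH b by simp
      qed
    next
      fix b show "\<bar>F b\<bar> \<le> 1" by (simp add: F_def)
    qed
    then have X: "1 - real (m + 1) * ?\<delta> \<le> measure_pmf.expectation (iidl M (Qf j)) F" by simp
    have mono: "1 - real (Suc m + 1) * ?\<delta> \<le> 1 - real (m + 1) * ?\<delta>"
      by (simp add: algebra_simps)
    show ?thesis using X mono eq by linarith
  next
    case False
    have "1 - real (m + 1) * ?\<delta> - 1 * measure_pmf.prob (iidl M (Qf j)) {b. cnt b < \<tau> * real M} \<le> measure_pmf.expectation (iidl M (Qf j)) F"
    proof (rule exp_ge_split[where B=1])
      fix b assume b: "b \<in> set_pmf (iidl M (Qf j))"
      show "1 - real (m + 1) * ?\<delta> - 1 * indicator {b. cnt b < \<tau> * real M} b \<le> F b"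
      proof (cases "cnt b < \<tau> * real M")
        case True
        have A: "0 \<le> real (m + 1) * ?\<delta>" by simp
        have B: "0 \<le> F b" by (simp add: F_def)
        have ind: "indicator {b. cnt b < \<tau> * real M} b = (1::real)" using True by simp
        show ?thesis unfolding ind using A B by linarith
      next
        case False
        then show ?thesis using IH b by simp
      qed
    next
      fix b show "\<bar>F b\<bar> \<le> 1" by (simp add: F_def)
    qed
    moreover have "measure_pmf.prob (iidl M (Qf j)) {b. cnt b < \<tau> * real M} \<le> ?\<delta>"
      using err_acc False by simp
    ultimately show ?thesis using eq by (simp add: algebra_simps)
  qed
qed


lemma exp_bounds:
  fixes f :: "'a \<Rightarrow> real"
  assumes "\<And>x. x \<in> set_pmf p \<Longrightarrow> a \<le> f x \<and> f x \<le> b"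
  shows "a \<le> measure_pmf.expectation p f \<and> measure_pmf.expectation p f \<le> b"
proof -
  obtain x0 where "x0 \<in> set_pmf p" using set_pmf_not_empty[of p] by blast
  then have ab: "a \<le> b" using assms by force
  define f' where "f' = (\<lambda>x. max a (min (f x) b))"
  have eq: "measure_pmf.expectation p f = measure_pmf.expectation p f'"
    using assms by (intro integral_cong_AE AE_pmfI) (auto simp: f'_def)
  have i: "integrable (measure_pmf p) f'"
    by (rule integrable_pmf_bounded[where B="\<bar>a\<bar> + \<bar>b\<bar>"]) (auto simp: f'_def)
  have "measure_pmf.expectation p (\<lambda>_. a) \<le> measure_pmf.expectation p f'"
    using i ab by (intro integral_mono) (auto simp: f'_def)
  moreover have "measure_pmf.expectation p f' \<le> measure_pmf.expectation p (\<lambda>_. b)"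
    using i ab by (intro integral_mono) (auto simp: f'_def)
  ultimately show ?thesis using eq by simp
qed

lemma exp_const_on:
  fixes f :: "'a \<Rightarrow> real"
  assumes "\<And>x. x \<in> set_pmf p \<Longrightarrow> f x = c"
  shows "measure_pmf.expectation p f = c"
  using exp_bounds[of p c f c] assms by auto

lemma len_bound:
  "length (fst s0) \<le> Suc J * M \<Longrightarrow> s \<in> set_pmf (brun Qf dd s0 t) \<Longrightarrow> length (fst s) \<le> Suc J * M"
  by (rule brun_len_bound[OF dec_Inr_len[OF M]])

lemma exp_len_bounds:
  "length (fst s0) \<le> Suc J * M \<Longrightarrow>
   0 \<le> measure_pmf.expectation (brun Qf dd s0 t) (\<lambda>s. real (length (fst s))) \<and>
   measure_pmf.expectation (brun Qf dd s0 t) (\<lambda>s. real (length (fst s))) \<le> real (Suc J * M)"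
proof (intro exp_bounds)
  fix x assume a: "length (fst s0) \<le> Suc J * M" and x: "x \<in> set_pmf (brun Qf dd s0 t)"
  have "length (fst x) \<le> Suc J * M" by (rule len_bound[OF a x])
  then show "0 \<le> real (length (fst x)) \<and> real (length (fst x)) \<le> real (Suc J * M)"
    by (intro conjI) (simp_all only: of_nat_le_iff of_nat_0_le_iff)
qed

lemma exp_aux:
  "j \<le> js \<Longrightarrow> m = js - j \<Longrightarrow> length bs = j * M \<Longrightarrow> dd bs = Inr j \<Longrightarrow>
   measure_pmf.expectation (brun Qf dd (bs, None) t) (\<lambda>s. real (length (fst s)))
     \<le> real (Suc js * M) + real (m + 1) * exp (- 2 * real M * g\<^sup>2) * real (Suc J * M)"
proof (induction m arbitrary: j bs t)
  case (0 j bs t)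
  note P = 0
  let ?\<delta> = "exp (- 2 * real M * g\<^sup>2)"
  let ?D = "Suc J * M"
  let ?len = "\<lambda>s::bool list \<times> nat option. real (length (fst s))"
  have j: "j = js" using 0 by simp
  have jJ: "j \<le> J" using j js_le by simp
  show ?case
  proof (cases "t \<le> M")
    case True
    have "brun Qf dd (bs, None) t = map_pmf (\<lambda>b. (bs @ b, None)) (iidl t (Qf j))"
      by (rule brun_block) (use dec_mid[OF M 0(3) jJ 0(4)] True in auto)
    then have "measure_pmf.expectation (brun Qf dd (bs, None) t) ?len = real (j * M + t)"
      using 0(3) by (simp, intro exp_const_on) (auto dest: iidl_length)
    also have "\<dots> \<le> real (Suc js * M)" using True j by simp
    finally have X: "measure_pmf.expectation (brun Qf dd (bs, None) t) ?len \<le> real (Suc js * M)" .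
    have nn: "0 \<le> real (0 + 1) * ?\<delta> * real ?D" by simp
    show ?thesis using X nn by linarith
  next
    case False
    define t' where "t' = t - M"
    have tt: "t = M + t'" using False by (simp add: t'_def)
    define G where "G = (\<lambda>b. measure_pmf.expectation (brun Qf dd (bs @ b, None) t') ?len)"
    have bs_le: "length (fst (bs, None :: nat option)) \<le> ?D"
      by (metis 0(3) fst_conv le_SucI jJ mult_le_mono1)
    have bsplit: "brun Qf dd (bs, None) t = bind_pmf (iidl M (Qf j)) (\<lambda>b. brun Qf dd (bs @ b, None) t')"
      unfolding tt by (rule block_split[OF jJ 0(3,4)])
    have "measure_pmf.expectation (brun Qf dd (bs, None) t) ?len = measure_pmf.expectation (iidl M (Qf j)) G"
      unfolding bsplit G_def
    proof (rule exp_bind'[where B="real ?D"])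
      fix x assume "x \<in> set_pmf (bind_pmf (iidl M (Qf j)) (\<lambda>b. brun Qf dd (bs @ b, None) t'))"
      then have "x \<in> set_pmf (brun Qf dd (bs, None) t)" using bsplit by simp
      then have "length (fst x) \<le> ?D" by (rule len_bound[OF bs_le])
      then show "0 \<le> ?len x \<and> ?len x \<le> real ?D" by (intro conjI) (simp_all only: of_nat_le_iff of_nat_0_le_iff)
    qed
    also have "\<dots> \<le> real (Suc js * M) + real ?D * measure_pmf.prob (iidl M (Qf j)) {b. \<not> cnt b < \<tau> * real M}"
    proof (rule exp_le_split[where B="real ?D"])
      fix b assume b: "b \<in> set_pmf (iidl M (Qf j))"
      then have lb: "length b = M" by (rule iidl_length)
      have bl: "length (fst (bs @ b, None :: nat option)) \<le> ?D" using lb 0(3) jJ by simp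
      have Gb: "0 \<le> G b \<and> G b \<le> real ?D" unfolding G_def by (rule exp_len_bounds[OF bl])
      show "G b \<le> real (Suc js * M) + real ?D * indicator {b. \<not> cnt b < \<tau> * real M} b"
      proof (cases "cnt b < \<tau> * real M")
        case True
        have "G b = real (Suc j * M)"
        proof (cases t')
          case 0
          then show ?thesis using lb P(3) by (simp add: G_def brun_0)
        next
          case (Suc t'')
          then show ?thesis using after_acc[OF P(3) lb True, of t''] lb P(3) by (simp add: G_def)
        qed
        then show ?thesis using j True by simp
      next
        case False
        have "real ?D \<le> real (Suc js * M) + real ?D" by simp
        moreover have ind: "indicator {b. \<not> cnt b < \<tau> * real M} b = (1::real)" using False by simp
        ultimately show ?thesis unfolding ind using Gb by linarith
      qed
    next
      fix b assume b: "b \<in> set_pmf (iidl M (Qf j))"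
      then have lb: "length b = M" by (rule iidl_length)
      have bl: "length (fst (bs @ b, None :: nat option)) \<le> ?D" using lb P(3) jJ by simp
      have Gb: "0 \<le> G b \<and> G b \<le> real ?D" unfolding G_def by (rule exp_len_bounds[OF bl])
      then show "\<bar>G b\<bar> \<le> real ?D" by simp
    qed
    also have "\<dots> \<le> real (Suc js * M) + real ?D * ?\<delta>"
      using err_rej[of j] js_ok j by (intro add_left_mono mult_left_mono) auto
    finally have X: "measure_pmf.expectation (brun Qf dd (bs, None) t) ?len \<le> real (Suc js * M) + real ?D * ?\<delta>" .
    have e: "real ?D * ?\<delta> = real (0 + 1) * ?\<delta> * real ?D" by simp
    show ?thesis using X unfolding e .
  qed
next
  case (Suc m j bs t)
  note P = Suc.prems
  let ?\<delta> = "exp (- 2 * real M * g\<^sup>2)"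
  let ?D = "Suc J * M"
  let ?len = "\<lambda>s::bool list \<times> nat option. real (length (fst s))"
  let ?R = "real (Suc js * M) + real (m + 1) * ?\<delta> * real ?D"
  have j: "j < js" using P by simp
  have jJ: "Suc j \<le> J" using j js_le by simp
  have j0: "j \<le> J" using jJ by simp
  have mono: "?R \<le> real (Suc js * M) + real (Suc m + 1) * ?\<delta> * real ?D"
    by (intro add_left_mono mult_right_mono) auto
  have Rge: "real (Suc js * M) \<le> ?R" by simp
  show ?case
  proof (cases "t \<le> M")
    case True
    have "brun Qf dd (bs, None) t = map_pmf (\<lambda>b. (bs @ b, None)) (iidl t (Qf j))"
      by (rule brun_block) (use dec_mid[OF M P(3) j0 P(4)] True in auto)
    then have "measure_pmf.expectation (brun Qf dd (bs, None) t) ?len = real (j * M + t)"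
      using P(3) by (simp, intro exp_const_on) (auto dest: iidl_length)
    also have "\<dots> \<le> real (Suc js * M)"
    proof -
      have "j * M + t \<le> Suc j * M" using True by simp
      also have "\<dots> \<le> Suc js * M" using j by (intro mult_le_mono1) simp
      finally show ?thesis by (simp only: of_nat_le_iff)
    qed
    finally show ?thesis using Rge mono by linarith
  next
    case False
    define t' where "t' = t - M"
    have tt: "t = M + t'" using False by (simp add: t'_def)
    define G where "G = (\<lambda>b. measure_pmf.expectation (brun Qf dd (bs @ b, None) t') ?len)"
    have bs_le: "length (fst (bs, None :: nat option)) \<le> ?D"
      by (metis P(3) fst_conv le_SucI j0 mult_le_mono1)
    have bsplit: "brun Qf dd (bs, None) t = bind_pmf (iidl M (Qf j)) (\<lambda>b. brun Qf dd (bs @ b, None) t')"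
      unfolding tt by (rule block_split[OF j0 P(3,4)])
    have "measure_pmf.expectation (brun Qf dd (bs, None) t) ?len = measure_pmf.expectation (iidl M (Qf j)) G"
      unfolding bsplit G_def
    proof (rule exp_bind'[where B="real ?D"])
      fix x assume "x \<in> set_pmf (bind_pmf (iidl M (Qf j)) (\<lambda>b. brun Qf dd (bs @ b, None) t'))"
      then have "x \<in> set_pmf (brun Qf dd (bs, None) t)" using bsplit by simp
      then have "length (fst x) \<le> ?D" by (rule len_bound[OF bs_le])
      then show "0 \<le> ?len x \<and> ?len x \<le> real ?D" by (intro conjI) (simp_all only: of_nat_le_iff of_nat_0_le_iff)
    qed
    also have "\<dots> \<le> ?R + 0 * measure_pmf.prob (iidl M (Qf j)) {}"
    proof (rule exp_le_split[where B="real ?D"])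
      fix b assume b: "b \<in> set_pmf (iidl M (Qf j))"
      then have lb: "length b = M" by (rule iidl_length)
      show "G b \<le> ?R + 0 * indicator {} b"
      proof (cases "cnt b < \<tau> * real M")
        case True
        have "G b = real (Suc j * M)"
        proof (cases t')
          case 0
          then show ?thesis using lb P(3) by (simp add: G_def brun_0)
        next
          case (Suc t'')
          then show ?thesis using after_acc[OF P(3) lb True, of t''] lb P(3) by (simp add: G_def)
        qed
        also have "\<dots> \<le> real (Suc js * M)"
          using j by (simp only: of_nat_le_iff, intro mult_le_mono1) simp
        finally have "G b \<le> real (Suc js * M)" .
        then show ?thesis using Rge by linarith
      next
        case False
        have "G b \<le> ?R" unfolding G_def
        proof (rule Suc.IH)
          show "Suc j \<le> js" using j by simp
          show "m = js - Suc j" using P by simp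
          show "length (bs @ b) = Suc j * M" using P lb by simp
          show "dd (bs @ b) = Inr (Suc j)" by (rule after_rej[OF P(3) lb False jJ])
        qed
        then show ?thesis by simp
      qed
    next
      fix b assume b: "b \<in> set_pmf (iidl M (Qf j))"
      then have lb: "length b = M" by (rule iidl_length)
      have bl: "length (fst (bs @ b, None :: nat option)) \<le> ?D" using lb P(3) j0 by simp
      have Gb: "0 \<le> G b \<and> G b \<le> real ?D" unfolding G_def by (rule exp_len_bounds[OF bl])
      then show "\<bar>G b\<bar> \<le> real ?D" by simp
    qed
    finally have X: "measure_pmf.expectation (brun Qf dd (bs, None) t) ?len \<le> ?R + 0 * measure_pmf.prob (iidl M (Qf j)) {}" .
    show ?thesis using X mono by linarith
  qed
qed


lemma js_least: "real k \<le> \<alpha> * r ^ j \<Longrightarrow> js \<le> j"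
  unfolding js_def by (rule Least_le)

lemma main_succ:
  "1 - real (js + 1) * exp (- 2 * real M * g\<^sup>2) \<le>
     measure_pmf.prob (brun Qf dd ([], None) (js * M + M + 1))
       {s. \<exists>kb. snd s = Some kb \<and> (1 - \<epsilon>) * real kb \<le> real k \<and> k \<le> kb}"
  using succ_aux[of 0 js "[]"] dec_0 unfolding Good_def by simp

lemma main_exp:
  "measure_pmf.expectation (brun Qf dd ([], None) t) (\<lambda>s. real (length (fst s)))
     \<le> real (Suc js * M) + real (js + 1) * exp (- 2 * real M * g\<^sup>2) * real (Suc J * M)"
  using exp_aux[of 0 js "[]" t] dec_0 by simp

end

lemma q_formula:
  assumes "K \<subseteq> {..<n}" "0 \<le> \<rho>" "\<rho> \<le> 1" "0 < r"
  shows "pmf (Qb \<rho> K (pool n r) j) True = \<rho> + (1 - 2 * \<rho>) * (1 - 2 powr (- (real (card K) / r ^ j)))"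
proof -
  have "2 powr (- (1 / r ^ j)) \<le> 2 powr 0" using assms(4) by (intro powr_mono) auto
  then have p1: "0 \<le> prate r j" unfolding prate_def by simp
  have p2: "prate r j \<le> 1" unfolding prate_def by simp
  have "(1 - prate r j) ^ card K = (2 powr (- (1 / r ^ j))) ^ card K" by (simp add: prate_def)
  also have "\<dots> = 2 powr (real (card K) * (- (1 / r ^ j)))" by (rule powr_power) simp
  also have "real (card K) * (- (1 / r ^ j)) = - (real (card K) / r ^ j)" by simp
  finally show ?thesis using pmf_Qb_pool[OF assms(1-3) p1 p2] by simp
qed

lemma H1_pool:
  assumes "K \<subseteq> {..<n}" "0 \<le> \<rho>" "\<rho> \<le> 1/2" "0 < r" "r ^ j < real (card K)"
  shows "\<rho> + (1 - 2 * \<rho>) * (1/2) \<le> pmf (Qb \<rho> K (pool n r) j) True"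
proof -
  have rj: "0 < r ^ j" using assms by simp
  have "1 \<le> real (card K) / r ^ j" using assms rj by simp
  then have "2 powr (- (real (card K) / r ^ j)) \<le> 2 powr (-1)"
    by (intro powr_mono) auto
  then have "2 powr (- (real (card K) / r ^ j)) \<le> 1/2" by (simp add: powr_minus)
  then have "(1 - 2 * \<rho>) * (1/2) \<le> (1 - 2 * \<rho>) * (1 - 2 powr (- (real (card K) / r ^ j)))"
    using assms by (intro mult_left_mono) auto
  then show ?thesis using q_formula[OF assms(1,2) _ assms(4), of j] assms(3) by simp
qed

lemma H2_pool:
  assumes "K \<subseteq> {..<n}" "0 \<le> \<rho>" "\<rho> \<le> 1/2" "0 < r" "real (card K) \<le> \<alpha> * r ^ j"
  shows "pmf (Qb \<rho> K (pool n r) j) True \<le> \<rho> + (1 - 2 * \<rho>) * (1 - 2 powr (- \<alpha>))"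
proof -
  have rj: "0 < r ^ j" using assms by simp
  have "real (card K) / r ^ j \<le> \<alpha>" using assms rj by (simp add: divide_le_eq)
  then have "2 powr (- \<alpha>) \<le> 2 powr (- (real (card K) / r ^ j))"
    by (intro powr_mono) auto
  then have "(1 - 2 * \<rho>) * (1 - 2 powr (- (real (card K) / r ^ j))) \<le> (1 - 2 * \<rho>) * (1 - 2 powr (- \<alpha>))"
    using assms by (intro mult_left_mono) auto
  then show ?thesis using q_formula[OF assms(1,2) _ assms(4), of j] assms(3) by simp
qed


lemma jbound:
  assumes "1 < r" "0 < \<alpha>" "\<alpha> \<le> 1" "1 \<le> x"
  shows "x \<le> \<alpha> * r ^ nat \<lceil>ln (x / \<alpha>) / ln r\<rceil>"
    and "real (nat \<lceil>ln (x / \<alpha>) / ln r\<rceil>) \<le> ln (x / \<alpha>) / ln r + 1"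
proof -
  define L where "L = ln (x / \<alpha>)"
  have lr: "0 < ln r" using assms by simp
  have xa: "1 \<le> x / \<alpha>" using assms by (simp add: le_divide_eq)
  then have L0: "0 \<le> L" unfolding L_def by simp
  then have L1: "0 \<le> L / ln r" using lr by simp
  define j where "j = nat \<lceil>L / ln r\<rceil>"
  have jge: "L / ln r \<le> real j" unfolding j_def using L1 by linarith
  have jle: "real j \<le> L / ln r + 1" unfolding j_def using L1 by linarith
  have "L \<le> real j * ln r" using jge lr by (simp add: divide_le_eq)
  then have "exp L \<le> exp (real j * ln r)" by simp
  also have "exp (real j * ln r) = r powr real j"
    using assms(1) by (simp add: powr_def)
  also have "\<dots> = r ^ j"
    using assms(1) by (simp add: powr_realpow)
  finally have "x / \<alpha> \<le> r ^ j" unfolding L_def using assms xa by simp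
  then show "x \<le> \<alpha> * r ^ nat \<lceil>ln (x / \<alpha>) / ln r\<rceil>"
    using assms(2) unfolding j_def L_def by (simp add: divide_le_eq mult.commute)
  show "real (nat \<lceil>ln (x / \<alpha>) / ln r\<rceil>) \<le> ln (x / \<alpha>) / ln r + 1"
    using jle unfolding j_def L_def .
qed


lemma succ_link:
  "measure_pmf.prob (brun (Qb \<rho> K P) d ([], None) t0) {s. \<exists>kb. snd s = Some kb \<and> Pr kb}
     \<le> gt_success_prob \<rho> K (mkalgo d P) Pr"
proof -
  have "measure_pmf.prob (brun (Qb \<rho> K P) d ([], None) t0) {s. \<exists>kb. snd s = Some kb \<and> Pr kb}
      = measure_pmf.prob (gt_run \<rho> K (mkalgo d P) t0) {s. \<exists>kb. snd s = Some kb \<and> Pr kb}"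
    unfolding strip_run[symmetric] by (simp add: vimage_def strip_def)
  also have "\<dots> \<le> gt_success_prob \<rho> K (mkalgo d P) Pr"
    unfolding gt_success_prob_def
    by (rule cSUP_upper) (auto intro!: bdd_aboveI[where M=1])
  finally show ?thesis .
qed

lemma tests_link:
  "gt_tests_upto \<rho> K (mkalgo d P) t = measure_pmf.expectation (brun (Qb \<rho> K P) d ([], None) t) (\<lambda>s. real (length (fst s)))"
  unfolding gt_tests_upto_def strip_run[symmetric] by (simp add: strip_def)

lemma main_eps:
  fixes \<rho> c \<epsilon> :: real
  assumes rho: "0 < \<rho>" "\<rho> < 1/2" and c: "0 < c" and eps: "0 < \<epsilon>" "\<epsilon> < 1"
  shows "\<exists>A :: nat \<Rightarrow> gt_algo. \<exists>C :: real. \<forall>\<^sub>F n in sequentially.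
            \<forall>K. K \<subseteq> {..<n} \<and> K \<noteq> {} \<longrightarrow>
              gt_success_prob \<rho> K (A n)
                 (\<lambda>kb. (1 - \<epsilon>) * real kb \<le> real (card K) \<and> card K \<le> kb)
                \<ge> 1 - C * real n powr (- c)
            \<and> (\<forall>t. gt_tests_upto \<rho> K (A n) t \<le> C * ln (real (card K) + 1) * ln (real n))"
proof -
  define \<alpha> where "\<alpha> = 1 - \<epsilon> / 2"
  define r where "r = \<alpha> / (1 - \<epsilon>)"
  define ulo where "ulo = 1 - 2 powr (- \<alpha>)"
  define \<tau> where "\<tau> = \<rho> + (1 - 2 * \<rho>) * (1/2 + ulo) / 2"
  define g where "g = (1 - 2 * \<rho>) * (1/2 - ulo) / 2"
  define B where "B = (c + 1) / (2 * g\<^sup>2)"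
  define Lr where "Lr = ln r"
  define Mf where "Mf = (\<lambda>n::nat. nat \<lceil>B * ln (real n)\<rceil>)"
  define Jf where "Jf = (\<lambda>n::nat. nat \<lceil>ln (real n / \<alpha>) / ln r\<rceil>)"
  define A where "A = (\<lambda>n. mkalgo (dec (Mf n) (Jf n) r \<tau>) (pool n r))"
  define C1 where "C1 = (1 + \<bar>ln \<alpha>\<bar>) / Lr + 2"
  define C2 where "C2 = 1 / Lr + (\<bar>ln \<alpha>\<bar> / Lr + 2) / ln 2"
  define C3 where "C3 = B + 1 / ln 2"
  define C where "C = C1 + C2 * C3 * (1 + C1)"
  have al0: "0 < \<alpha>" and al1: "\<alpha> < 1" using eps by (auto simp: \<alpha>_def)
  have r1: "1 < r" using eps by (simp add: r_def \<alpha>_def field_simps)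
  have er: "(1 - \<epsilon>) * r \<le> \<alpha>" using eps by (simp add: r_def)
  have Lr0: "0 < Lr" using r1 by (simp add: Lr_def)
  have "2 powr (-1) < 2 powr (- \<alpha>)" using al1 by (intro powr_less_mono) auto
  then have ulo: "ulo < 1/2" by (simp add: ulo_def powr_minus)
  have g0: "0 < g" using ulo rho by (simp add: g_def)
  have tg1: "\<tau> + g = \<rho> + (1 - 2 * \<rho>) * (1/2)" by (simp add: \<tau>_def g_def field_simps)
  have tg2: "\<tau> - g = \<rho> + (1 - 2 * \<rho>) * (1 - 2 powr (- \<alpha>))" by (simp add: \<tau>_def g_def ulo_def field_simps)
  have B0: "0 < B" using g0 c by (simp add: B_def)
  have ln2: "0 < ln (2::real)" by simp
  have C1p: "0 \<le> C1" using Lr0 by (simp add: C1_def)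
  have C2p: "0 \<le> C2" using Lr0 by (simp add: C2_def)
  have C3p: "0 \<le> C3" using B0 by (simp add: C3_def)
  show ?thesis
  proof (intro exI[of _ A] exI[of _ C] eventually_sequentiallyI[of 2] allI impI)
    fix n :: nat and K :: "nat set"
    assume n2: "2 \<le> n" and KK: "K \<subseteq> {..<n} \<and> K \<noteq> {}"
    define k where "k = card K"
    define M where "M = Mf n"
    define J where "J = Jf n"
    have fK: "finite K" using KK finite_subset by blast
    have k1: "1 \<le> k" using fK KK by (simp add: k_def Suc_le_eq card_gt_0_iff)
    have kn: "k \<le> n" using KK card_mono[of "{..<n}" K] by (simp add: k_def)
    have n0: "0 < real n" using n2 by simp
    have lnn: "ln 2 \<le> ln (real n)" using n2 by simp
    have lnn0: "0 < ln (real n)" using n2 by simp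
    have BL: "0 < B * ln (real n)" using B0 lnn0 by simp
    have Mge: "B * ln (real n) \<le> real M" unfolding M_def Mf_def by linarith
    have Mle: "real M \<le> B * ln (real n) + 1" unfolding M_def Mf_def using BL by linarith
    have M0: "0 < M" using Mge BL by linarith
    have JJn: "real n \<le> \<alpha> * r ^ J" unfolding J_def Jf_def using jbound(1)[OF r1 al0 _ ] al1 n2 by simp
    have JJ: "real k \<le> \<alpha> * r ^ J" using JJn kn by (meson of_nat_le_iff order_trans)
    have Jle: "real J \<le> ln (real n / \<alpha>) / Lr + 1"
      unfolding J_def Jf_def Lr_def using jbound(2)[OF r1 al0 _ ] al1 n2 by simp
    define Qf where "Qf = Qb \<rho> K (pool n r)"
    have H1: "\<tau> + g \<le> pmf (Qf j) True" if "r ^ j < real k" for j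
      unfolding tg1 Qf_def using H1_pool[of K n \<rho> r j] KK rho r1 that by (simp add: k_def)
    have H2: "pmf (Qf j) True \<le> \<tau> - g" if "real k \<le> \<alpha> * r ^ j" for j
      unfolding tg2 Qf_def using H2_pool[of K n \<rho> r \<alpha> j] KK rho r1 that by (simp add: k_def)
    note hyps = M0 k1 r1 al0 _ _ _ er g0 H1 H2 JJ
    show "1 - C * real n powr (- c) \<le> gt_success_prob \<rho> K (A n) (\<lambda>kb. (1 - \<epsilon>) * real kb \<le> real (card K) \<and> card K \<le> kb)
      \<and> (\<forall>t. gt_tests_upto \<rho> K (A n) t \<le> C * ln (real (card K) + 1) * ln (real n))"
    proof -
      have al1': "\<alpha> \<le> 1" using al1 by simp
      have eps0: "0 \<le> \<epsilon>" "\<epsilon> \<le> 1" using eps by auto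
      have k1': "1 \<le> real k" using k1 by simp
      define jj where "jj = js k r \<alpha>"
      define \<delta> where "\<delta> = exp (- 2 * real M * g\<^sup>2)"
      have d0: "0 \<le> \<delta>" by (simp add: \<delta>_def)
      have succ: "1 - real (jj + 1) * \<delta> \<le> measure_pmf.prob (brun Qf (dec M J r \<tau>) ([], None) (jj * M + M + 1))
         {s. \<exists>kb. snd s = Some kb \<and> (1 - \<epsilon>) * real kb \<le> real k \<and> k \<le> kb}"
        unfolding jj_def \<delta>_def by (rule main_succ[OF M0 k1 r1 al0 al1' eps0 er g0 H1 H2 JJ])
      have expb: "measure_pmf.expectation (brun Qf (dec M J r \<tau>) ([], None) t) (\<lambda>s. real (length (fst s)))
          \<le> real (Suc jj * M) + real (jj + 1) * \<delta> * real (Suc J * M)" for t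
        unfolding jj_def \<delta>_def by (rule main_exp[OF M0 k1 r1 al0 al1' eps0 er g0 H1 H2 JJ])
      have jjJ: "jj \<le> J" unfolding jj_def by (rule js_least[OF M0 k1 r1 al0 al1' eps0 er g0 H1 H2 JJ JJ])
      have jj0: "jj \<le> nat \<lceil>ln (real k / \<alpha>) / ln r\<rceil>" unfolding jj_def
        by (rule js_least[OF M0 k1 r1 al0 al1' eps0 er g0 H1 H2 JJ jbound(1)[OF r1 al0 al1' k1']])
      have jjle: "real jj \<le> ln (real k / \<alpha>) / Lr + 1"
        using jj0 jbound(2)[OF r1 al0 al1' k1'] unfolding Lr_def by linarith
      have "(c + 1) * ln (real n) = 2 * g\<^sup>2 * (B * ln (real n))" using g0 by (simp add: B_def field_simps)
      also have "\<dots> \<le> 2 * g\<^sup>2 * real M" using Mge g0 by (intro mult_left_mono) auto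
      finally have "- 2 * real M * g\<^sup>2 \<le> - (c + 1) * ln (real n)" by (simp add: algebra_simps)
      then have "\<delta> \<le> exp (- (c + 1) * ln (real n))" unfolding \<delta>_def by simp
      also have "\<dots> = real n powr (- (c + 1))" using n0 by (simp add: powr_def)
      finally have dle: "\<delta> \<le> real n powr (- (c + 1))" .
      have lnle: "ln (real n) \<le> real n" using ln_le_minus_one[OF n0] by linarith
      have "ln (real n / \<alpha>) = ln (real n) - ln \<alpha>" using n0 al0 by (simp add: ln_div)
      also have "\<dots> \<le> (1 + \<bar>ln \<alpha>\<bar>) * real n"
      proof -
        have "\<bar>ln \<alpha>\<bar> \<le> \<bar>ln \<alpha>\<bar> * real n" using n2 by (simp add: mult_le_cancel_left1)
        then show ?thesis using lnle by (simp add: algebra_simps)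
      qed
      finally have "ln (real n / \<alpha>) / Lr \<le> (1 + \<bar>ln \<alpha>\<bar>) * real n / Lr"
        using Lr0 by (intro divide_right_mono) auto
      then have Jn: "real J + 1 \<le> C1 * real n"
        using Jle n2 by (simp add: C1_def algebra_simps)
      have npow: "real n * real n powr (- (c + 1)) = real n powr (- c)"
      proof -
        have "real n powr (- c) = real n powr (1 + (- (c + 1)))" by simp
        also have "\<dots> = real n powr 1 * real n powr (- (c + 1))" by (rule powr_add)
        finally show ?thesis using n0 by simp
      qed
      have err: "(real J + 1) * \<delta> \<le> C1 * real n powr (- c)"
      proof -
        have "(real J + 1) * \<delta> \<le> (C1 * real n) * real n powr (- (c + 1))"
          using Jn dle d0 by (intro mult_mono) auto
        then show ?thesis using npow by (simp add: mult.assoc)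
      qed
      have npc: "real n powr (- c) \<le> 1"
      proof -
        have "real n powr (- c) \<le> real n powr 0" using n2 c by (intro powr_mono) auto
        then show ?thesis using n0 by simp
      qed
      have npc0: "0 \<le> real n powr (- c)" by simp
      have "1 - C * real n powr (- c) \<le> 1 - C1 * real n powr (- c)"
      proof -
        have "C1 \<le> C" using C2p C3p C1p by (simp add: C_def)
        then show ?thesis using npc0 by (simp add: mult_right_mono)
      qed
      also have "\<dots> \<le> 1 - (real J + 1) * \<delta>" using err by simp
      also have "\<dots> \<le> 1 - real (jj + 1) * \<delta>"
        using jjJ d0 by (simp add: mult_right_mono)
      also have "\<dots> \<le> gt_success_prob \<rho> K (A n) (\<lambda>kb. (1 - \<epsilon>) * real kb \<le> real (card K) \<and> card K \<le> kb)"
        using succ succ_link[of \<rho> K "pool n r" "dec M J r \<tau>" "jj * M + M + 1" "\<lambda>kb. (1 - \<epsilon>) * real kb \<le> real (card K) \<and> card K \<le> kb"]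
        unfolding A_def M_def J_def Qf_def k_def by linarith
      finally have S: "1 - C * real n powr (- c) \<le> gt_success_prob \<rho> K (A n) (\<lambda>kb. (1 - \<epsilon>) * real kb \<le> real (card K) \<and> card K \<le> kb)" .
      have lnk2: "ln 2 \<le> ln (real k + 1)" using k1 by simp
      have lnk0: "0 \<le> ln (real k + 1)" using k1 by simp
      have jjC: "real jj + 1 \<le> C2 * ln (real k + 1)"
      proof -
        have "ln (real k / \<alpha>) = ln (real k) - ln \<alpha>" using k1 al0 by (simp add: ln_div)
        also have "\<dots> \<le> ln (real k + 1) + \<bar>ln \<alpha>\<bar>"
        proof -
          have "ln (real k) \<le> ln (real k + 1)" using k1 by simp
          moreover have "- ln \<alpha> \<le> \<bar>ln \<alpha>\<bar>" by simp
          ultimately show ?thesis by linarith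
        qed
        finally have "ln (real k / \<alpha>) / Lr \<le> (ln (real k + 1) + \<bar>ln \<alpha>\<bar>) / Lr"
          using Lr0 by (intro divide_right_mono) auto
        then have a: "real jj + 1 \<le> ln (real k + 1) / Lr + (\<bar>ln \<alpha>\<bar> / Lr + 2)"
          using jjle by (simp add: add_divide_distrib)
        have "1 \<le> ln (real k + 1) / ln 2" using lnk2 by simp
        then have "(\<bar>ln \<alpha>\<bar> / Lr + 2) * 1 \<le> (\<bar>ln \<alpha>\<bar> / Lr + 2) * (ln (real k + 1) / ln 2)"
          using Lr0 by (intro mult_left_mono) auto
        then have "real jj + 1 \<le> ln (real k + 1) / Lr + (\<bar>ln \<alpha>\<bar> / Lr + 2) * (ln (real k + 1) / ln 2)"
          using a by simp
        also have "\<dots> = C2 * ln (real k + 1)" by (simp add: C2_def algebra_simps)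
        finally show ?thesis .
      qed
      have MC: "real M \<le> C3 * ln (real n)"
      proof -
        have "1 \<le> ln (real n) / ln 2" using lnn by simp
        then have "real M \<le> B * ln (real n) + ln (real n) / ln 2" using Mle by linarith
        also have "\<dots> = C3 * ln (real n)" by (simp add: C3_def algebra_simps)
        finally show ?thesis .
      qed
      have T: "gt_tests_upto \<rho> K (A n) t \<le> C * ln (real (card K) + 1) * ln (real n)" for t
      proof -
        have "gt_tests_upto \<rho> K (A n) t = measure_pmf.expectation (brun Qf (dec M J r \<tau>) ([], None) t) (\<lambda>s. real (length (fst s)))"
          unfolding A_def M_def J_def Qf_def by (rule tests_link)
        also have "\<dots> \<le> real (Suc jj * M) + real (jj + 1) * \<delta> * real (Suc J * M)" by (rule expb)
        also have "\<dots> = (real jj + 1) * real M * (1 + (real J + 1) * \<delta>)" by (simp add: algebra_simps)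
        also have "\<dots> \<le> (C2 * ln (real k + 1)) * (C3 * ln (real n)) * (1 + C1)"
        proof (intro mult_mono)
          show "1 + (real J + 1) * \<delta> \<le> 1 + C1" using err npc C1p
            by (smt (verit) mult_left_le)
        qed (use jjC MC C2p C3p lnk0 lnn0 C1p d0 in auto)
        also have "\<dots> = (C2 * C3 * (1 + C1)) * ln (real k + 1) * ln (real n)" by (simp add: algebra_simps)
        also have "\<dots> \<le> C * ln (real k + 1) * ln (real n)"
          using C1p lnk0 lnn0 by (intro mult_right_mono) (auto simp: C_def)
        finally show ?thesis by (simp add: k_def)
      qed
      show ?thesis using S T by blast
    qed
  qed
qed

theorem lemma3:
  fixes \<rho> c :: real
  assumes "0 < \<rho>" "\<rho> < 1/2" "0 < c"
  shows "(\<exists>A :: nat \<Rightarrow> gt_algo. \<exists>C :: real. \<forall>\<^sub>F n in sequentially.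
            \<forall>K. K \<subseteq> {..<n} \<and> K \<noteq> {} \<longrightarrow>
              gt_success_prob \<rho> K (A n)
                 (\<lambda>kb. real kb / 2 \<le> real (card K) \<and> card K \<le> kb)
                \<ge> 1 - C * real n powr (- c)
            \<and> (\<forall>t. gt_tests_upto \<rho> K (A n) t \<le> C * ln (real (card K) + 1) * ln (real n)))
       \<and> (\<forall>\<epsilon>::real. 0 < \<epsilon> \<and> \<epsilon> < 1 \<longrightarrow>
          (\<exists>A :: nat \<Rightarrow> gt_algo. \<exists>C :: real. \<forall>\<^sub>F n in sequentially.
            \<forall>K. K \<subseteq> {..<n} \<and> K \<noteq> {} \<longrightarrow>
              gt_success_prob \<rho> K (A n)
                 (\<lambda>kb. (1 - \<epsilon>) * real kb \<le> real (card K) \<and> card K \<le> kb)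
                \<ge> 1 - C * real n powr (- c)
            \<and> (\<forall>t. gt_tests_upto \<rho> K (A n) t \<le> C * ln (real (card K) + 1) * ln (real n))))"
proof (rule conjI)
  have eqP: "\<And>K::nat set. (\<lambda>kb. real kb / 2 \<le> real (card K) \<and> card K \<le> kb) =
      (\<lambda>kb. (1 - 1/2) * real kb \<le> real (card K) \<and> card K \<le> kb)"
    by (auto simp: fun_eq_iff)
  have m: "\<exists>A :: nat \<Rightarrow> gt_algo. \<exists>C :: real. \<forall>\<^sub>F n in sequentially.
            \<forall>K. K \<subseteq> {..<n} \<and> K \<noteq> {} \<longrightarrow>
              gt_success_prob \<rho> K (A n)
                 (\<lambda>kb. (1 - 1/2) * real kb \<le> real (card K) \<and> card K \<le> kb)
                \<ge> 1 - C * real n powr (- c)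
            \<and> (\<forall>t. gt_tests_upto \<rho> K (A n) t \<le> C * ln (real (card K) + 1) * ln (real n))"
    by (rule main_eps) (use assms in auto)
  show "\<exists>A :: nat \<Rightarrow> gt_algo. \<exists>C :: real. \<forall>\<^sub>F n in sequentially.
            \<forall>K. K \<subseteq> {..<n} \<and> K \<noteq> {} \<longrightarrow>
              gt_success_prob \<rho> K (A n)
                 (\<lambda>kb. real kb / 2 \<le> real (card K) \<and> card K \<le> kb)
                \<ge> 1 - C * real n powr (- c)
            \<and> (\<forall>t. gt_tests_upto \<rho> K (A n) t \<le> C * ln (real (card K) + 1) * ln (real n))"
    unfolding eqP by (rule m)
next
  show "\<forall>\<epsilon>::real. 0 < \<epsilon> \<and> \<epsilon> < 1 \<longrightarrow>
          (\<exists>A :: nat \<Rightarrow> gt_algo. \<exists>C :: real. \<forall>\<^sub>F n in sequentially.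
            \<forall>K. K \<subseteq> {..<n} \<and> K \<noteq> {} \<longrightarrow>
              gt_success_prob \<rho> K (A n)
                 (\<lambda>kb. (1 - \<epsilon>) * real kb \<le> real (card K) \<and> card K \<le> kb)
                \<ge> 1 - C * real n powr (- c)
            \<and> (\<forall>t. gt_tests_upto \<rho> K (A n) t \<le> C * ln (real (card K) + 1) * ln (real n)))"
  proof (intro allI impI)
    fix \<epsilon> :: real assume e: "0 < \<epsilon> \<and> \<epsilon> < 1"
    show "\<exists>A :: nat \<Rightarrow> gt_algo. \<exists>C :: real. \<forall>\<^sub>F n in sequentially.
            \<forall>K. K \<subseteq> {..<n} \<and> K \<noteq> {} \<longrightarrow>
              gt_success_prob \<rho> K (A n)
                 (\<lambda>kb. (1 - \<epsilon>) * real kb \<le> real (card K) \<and> card K \<le> kb)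
                \<ge> 1 - C * real n powr (- c)
            \<and> (\<forall>t. gt_tests_upto \<rho> K (A n) t \<le> C * ln (real (card K) + 1) * ln (real n))"
      by (rule main_eps) (use assms e in auto)
  qed
qed

end
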